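(* In Setup A, let $f_1<f_2<\dots<f_s$ be the distinct values of $\{f(\tau'^* ):\tau'\in\mathcal{O}\}$ and for each $1\le u\le s$ choose $\tau_u\in\mathcal{O}$ with $f(\tau_u^* )=f_u$. For $\tau\in\mathcal{O}$ and $0\le i\le l-1$ let $H_{\tau,i}:M_{p^i\tau}\to M_{p^{i+1}\tau}$ be $F$ if $f(p^i\tau^* )\ge f(\tau^* )$ and $F+V'$ if $f(p^i\tau^* )<f(\tau^* )$. Fix $1\le u\le s$ and assume that for every $1\le j\le u$, $$\dim\big(\pi_{\tau_j}\circ H_{\tau_j,l-1}\circ\cdots\circ H_{\tau_j,0}(M_{\tau_j})\big)=f_j.$$ Then $w_\tau$ is maximal for every $\tau\in\mathcal{O}$ with $f(\tau^* )\le f_u$.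
   Context: Setup A. Let $k_0=\overline{\mathbb{F}}_p$ with Frobenius $\sigma$. Let $\mathcal{O}$ be a finite set of size $l$ with a cyclic permutation $\tau'\mapsto p\tau'$ (so $\mathcal{O}=\{\tau,p\tau,\dots,p^{l-1}\tau\}$ and $p^l\tau=\tau$). Fix an integer $g\ge1$ and, for each $\tau'\in\mathcal{O}$, non-negative integers $f(\tau')$, $f(\tau'^* )$ with $f(\tau')+f(\tau'^* )=g$ (the notation $f(p^i\tau^* )$ means $f((p^i\tau)^* )$). Let $M=\bigoplus_{\tau'\in\mathcal{O}}M_{\tau'}$ where $M_{\tau'}$ has $k_0$-basis $e_{\tau',1},\dots,e_{\tau',g}$; write $M_{\tau',k}=\mathrm{Span}(e_{\tau',1},\dots,e_{\tau',k})$. For each $\tau'$ fix increasing sequences $j_{\tau',1}<\dots<j_{\tau',f(\tau')}$ and $i_{\tau',1}<\dots<i_{\tau',f(\tau'^* )}$ partitioning $\{1,\dots,g\}$, and let $w_{\tau'}\in\mathrm{Sym}_g$ be given by $w_{\tau'}(j_{\tau',k})=k$, $w_{\tau'}(i_{\tau',k})=f(\tau')+k$. Let $F:M\to M$ be the $\sigma$-semilinear map with $F(e_{\tau',j})=e_{p\tau',\,w_{\tau'}(j)-f(\tau')}$ if $w_{\tau'}(j)>f(\tau')$ and $F(e_{\tau',j})=0$ otherwise. Let $V':M\to M$ be the semilinear map with $V'(e_{\tau',j})=e_{p\tau',\,f(\tau'^* )+w_{\tau'}(j)}$ if $w_{\tau'}(j)\le f(\tau')$ and $V'(e_{\tau',j})=0$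 otherwise. Let $Q_{\tau'}=\mathrm{Span}(e_{\tau',i_{\tau',k}})$, $Q^\vee_{\tau'^*}=\mathrm{Span}(e_{\tau',j_{\tau',k}})$, and $\pi_{\tau'}:M_{\tau'}\to Q_{\tau'}$ the projection with kernel $Q^\vee_{\tau'^*}$. We say $w_{\tau'}$ is maximal if $i_{\tau',k}=k$ for all $1\le k\le f(\tau'^* )$, i.e. $w_{\tau'}(k)=f(\tau')+k$ for $k\le f(\tau'^* )$ and $w_{\tau'}(k)=k-f(\tau'^* )$ for $k>f(\tau'^* )$ (equivalently $\ker F\cap M_{\tau',f(\tau'^* )}=0$; this is the permutation of maximal length). *)

theory Defs
  imports "HOL-Library.Function_Algebras" "HOL-Algebra.Algebraic_Closure_Type"
    "Berlekamp_Zassenhaus.Finite_Field"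
begin

type_synonym 'p kbar = "'p mod_ring alg_closure"

definition frob :: "'p::prime_card kbar \<Rightarrow> 'p kbar" where
  "frob x = x ^ CARD('p)"

text \<open>Each M_tau' is modelled as coordinate vectors nat => k, supported on {1..g};
  the orbit O is {0..<l} with p*t = (t+1) mod l, so p^i tau = (tau + i) mod l.\<close>
definition scalev :: "'k::field \<Rightarrow> (nat \<Rightarrow> 'k) \<Rightarrow> (nat \<Rightarrow> 'k)" where
  "scalev c v = (\<lambda>i. c * v i)"

definition Mtau :: "nat \<Rightarrow> (nat \<Rightarrow> 'k::field) set" where
  "Mtau g = {v. \<forall>m. m \<notin> {1..g} \<longrightarrow> v m = 0}"

definition ebas :: "nat \<Rightarrow> (nat \<Rightarrow> 'k::field)" where
  "ebas m = (\<lambda>i. if i = m then 1 else 0)"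

definition semilin :: "('k::field \<Rightarrow> 'k) \<Rightarrow> nat \<Rightarrow> (nat \<Rightarrow> nat \<Rightarrow> 'k) \<Rightarrow> (nat \<Rightarrow> 'k) \<Rightarrow> (nat \<Rightarrow> 'k)" where
  "semilin \<sigma> g img v = (\<Sum>j\<in>{1..g}. scalev (\<sigma> (v j)) (img j))"

definition wperm :: "(nat \<Rightarrow> nat) \<Rightarrow> (nat \<Rightarrow> nat) \<Rightarrow> (nat \<Rightarrow> nat \<Rightarrow> nat) \<Rightarrow> (nat \<Rightarrow> nat \<Rightarrow> nat)
    \<Rightarrow> nat \<Rightarrow> nat \<Rightarrow> nat" where
  "wperm f fs jseq iseq t x =
     (if x \<in> jseq t ` {1..f t} then (THE k. k \<in> {1..f t} \<and> jseq t k = x)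
      else f t + (THE k. k \<in> {1..fs t} \<and> iseq t k = x))"

definition Fmap :: "('k::field \<Rightarrow> 'k) \<Rightarrow> nat \<Rightarrow> (nat \<Rightarrow> nat) \<Rightarrow> (nat \<Rightarrow> nat) \<Rightarrow> (nat \<Rightarrow> nat \<Rightarrow> nat)
    \<Rightarrow> (nat \<Rightarrow> nat \<Rightarrow> nat) \<Rightarrow> nat \<Rightarrow> (nat \<Rightarrow> 'k) \<Rightarrow> (nat \<Rightarrow> 'k)" where
  "Fmap \<sigma> g f fs jseq iseq t = semilin \<sigma> g (\<lambda>j.
     (let w = wperm f fs jseq iseq t j in if w > f t then ebas (w - f t) else 0))"

definition V'map :: "('k::field \<Rightarrow> 'k) \<Rightarrow> nat \<Rightarrow> (nat \<Rightarrow> nat) \<Rightarrow> (nat \<Rightarrow> nat) \<Rightarrow> (nat \<Rightarrow> nat \<Rightarrow> nat)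
    \<Rightarrow> (nat \<Rightarrow> nat \<Rightarrow> nat) \<Rightarrow> nat \<Rightarrow> (nat \<Rightarrow> 'k) \<Rightarrow> (nat \<Rightarrow> 'k)" where
  "V'map \<sigma> g f fs jseq iseq t = semilin \<sigma> g (\<lambda>j.
     (let w = wperm f fs jseq iseq t j in if w \<le> f t then ebas (fs t + w) else 0))"

definition Hmap :: "('k::field \<Rightarrow> 'k) \<Rightarrow> nat \<Rightarrow> nat \<Rightarrow> (nat \<Rightarrow> nat) \<Rightarrow> (nat \<Rightarrow> nat) \<Rightarrow> (nat \<Rightarrow> nat \<Rightarrow> nat)
    \<Rightarrow> (nat \<Rightarrow> nat \<Rightarrow> nat) \<Rightarrow> nat \<Rightarrow> nat \<Rightarrow> (nat \<Rightarrow> 'k) \<Rightarrow> (nat \<Rightarrow> 'k)" where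
  "Hmap \<sigma> l g f fs jseq iseq \<tau> i =
     (let t = (\<tau> + i) mod l in
      if fs t \<ge> fs \<tau> then Fmap \<sigma> g f fs jseq iseq t
      else (\<lambda>v. Fmap \<sigma> g f fs jseq iseq t v + V'map \<sigma> g f fs jseq iseq t v))"

primrec Hcomp :: "('k::field \<Rightarrow> 'k) \<Rightarrow> nat \<Rightarrow> nat \<Rightarrow> (nat \<Rightarrow> nat) \<Rightarrow> (nat \<Rightarrow> nat) \<Rightarrow> (nat \<Rightarrow> nat \<Rightarrow> nat)
    \<Rightarrow> (nat \<Rightarrow> nat \<Rightarrow> nat) \<Rightarrow> nat \<Rightarrow> nat \<Rightarrow> (nat \<Rightarrow> 'k) \<Rightarrow> (nat \<Rightarrow> 'k)" where
  "Hcomp \<sigma> l g f fs jseq iseq \<tau> 0 = id"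
| "Hcomp \<sigma> l g f fs jseq iseq \<tau> (Suc n) =
     Hmap \<sigma> l g f fs jseq iseq \<tau> n \<circ> Hcomp \<sigma> l g f fs jseq iseq \<tau> n"

text \<open>pi_t : M_t -> Q_t, projection with kernel Q^vee_{t^*} = span(e_{j_{t,k}}).\<close>
definition proj :: "(nat \<Rightarrow> nat) \<Rightarrow> (nat \<Rightarrow> nat \<Rightarrow> nat) \<Rightarrow> nat \<Rightarrow> (nat \<Rightarrow> 'k::field) \<Rightarrow> (nat \<Rightarrow> 'k)" where
  "proj fs iseq t v = (\<lambda>m. if m \<in> iseq t ` {1..fs t} then v m else 0)"

definition kdim :: "(nat \<Rightarrow> 'k::field) set \<Rightarrow> nat" where
  "kdim S = vector_space.dim scalev S"

definition maximal :: "(nat \<Rightarrow> nat) \<Rightarrow> (nat \<Rightarrow> nat \<Rightarrow> nat) \<Rightarrow> nat \<Rightarrow> bool" where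
  "maximal fs iseq t \<longleftrightarrow> (\<forall>k\<in>{1..fs t}. iseq t k = k)"

end

theory Submission imports Defs begin

definition CS :: "nat set \<Rightarrow> (nat \<Rightarrow> 'k::field) set" where
  "CS A = {v. \<forall>m. m \<notin> A \<longrightarrow> v m = 0}"

lemma vs_scalev: "vector_space (scalev :: 'k::field \<Rightarrow> _)"
  by unfold_locales (auto simp: scalev_def fun_eq_iff algebra_simps)

lemma sum_fun_app: "(\<Sum>m\<in>B. f m) i = (\<Sum>m\<in>B. f m i)"
  by (induction B rule: infinite_finite_induct) auto

lemma CS_span:
  assumes "finite B"
  shows "(CS B :: (nat \<Rightarrow> 'k::field) set) \<subseteq> module.span scalev (ebas ` B)"
proof
  interpret vector_space "scalev :: 'k \<Rightarrow> _" by (rule vs_scalev)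
  fix v :: "nat \<Rightarrow> 'k" assume v: "v \<in> CS B"
  have "v = (\<Sum>m\<in>B. scalev (v m) (ebas m))"
  proof
    fix i show "v i = (\<Sum>m\<in>B. scalev (v m) (ebas m)) i"
      using v assms by (auto simp: sum_fun_app scalev_def ebas_def CS_def if_distrib cong: if_cong)
  qed
  also have "\<dots> \<in> span (ebas ` B)"
    by (intro span_sum span_scale span_base) auto
  finally show "v \<in> span (ebas ` B)" .
qed

lemma kdim_le:
  assumes "finite B" "S \<subseteq> (CS B :: (nat \<Rightarrow> 'k::field) set)"
  shows "kdim S \<le> card B"
proof -
  interpret vector_space "scalev :: 'k \<Rightarrow> _" by (rule vs_scalev)
  have "kdim S \<le> card (ebas ` B :: (nat \<Rightarrow> 'k) set)"
    unfolding kdim_def using CS_span[OF assms(1)] assms(2)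
    by (intro dim_le_card) (auto intro: finite_imageI assms(1))
  also have "\<dots> \<le> card B" by (rule card_image_le[OF assms(1)])
  finally show ?thesis .
qed

lemma CS_zero[simp]: "0 \<in> CS A" by (simp add: CS_def)
lemma CS_add: "u \<in> CS A \<Longrightarrow> v \<in> CS A \<Longrightarrow> u + v \<in> CS A" by (simp add: CS_def)
lemma CS_scale: "u \<in> CS A \<Longrightarrow> scalev c u \<in> CS A" by (simp add: CS_def scalev_def)
lemma CS_mono: "u \<in> CS A \<Longrightarrow> A \<subseteq> B \<Longrightarrow> u \<in> CS B" by (auto simp: CS_def)
lemma CS_ebas: "n \<in> A \<Longrightarrow> ebas n \<in> CS A" by (simp add: CS_def ebas_def)
lemma CS_sum: "(\<And>j. j \<in> J \<Longrightarrow> h j \<in> CS A) \<Longrightarrow> sum h J \<in> CS A"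
  by (induction J rule: infinite_finite_induct) (auto intro: CS_add)

lemma semilin_CS:
  assumes "\<sigma> 0 = 0" "v \<in> CS A" "\<And>j. j \<in> A \<Longrightarrow> img j \<in> CS B"
  shows "semilin \<sigma> g img v \<in> CS B"
  unfolding semilin_def
proof (rule CS_sum)
  fix j show "scalev (\<sigma> (v j)) (img j) \<in> CS B"
  proof (cases "j \<in> A")
    case True thus ?thesis using assms by (intro CS_scale) auto
  next
    case False hence "v j = 0" using assms(2) by (auto simp: CS_def)
    thus ?thesis using assms(1) by (simp add: scalev_def zero_fun_def[symmetric])
  qed
qed

lemma frob0: "frob (0 :: 'p::prime_card kbar) = 0"
  unfolding frob_def using prime_gt_0_nat[OF prime_card] by simp

lemma Mtau_CS: "Mtau g = CS {1..g}" by (simp add: Mtau_def CS_def)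

lemma mono_ge:
  assumes "strict_mono_on {1..n} (h::nat\<Rightarrow>nat)" "c + 1 \<le> h 1" "k \<in> {1..n}"
  shows "c + k \<le> h k"
  using assms(3)
proof (induction k)
  case 0 then show ?case by simp
next
  case (Suc k)
  show ?case
  proof (cases "k = 0")
    case True then show ?thesis using assms(2) by simp
  next
    case False
    then have "c + k \<le> h k" using Suc by auto
    moreover have "h k < h (Suc k)" using assms(1) Suc.prems False
      by (auto simp: strict_mono_on_def)
    ultimately show ?thesis by simp
  qed
qed

lemma mono_gap:
  assumes "strict_mono_on {1..n} (h::nat\<Rightarrow>nat)" "k \<in> {1..n}" "k' \<in> {1..n}" "k \<le> k'"
  shows "h k + (k' - k) \<le> h k'"
  using assms(3,4)
proof (induction k')
  case 0 then show ?case by simp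
next
  case (Suc k')
  show ?case
  proof (cases "k = Suc k'")
    case True then show ?thesis by simp
  next
    case False
    then have "h k + (k' - k) \<le> h k'" using Suc assms(2) by auto
    moreover have "h k' < h (Suc k')" using assms(1,2) Suc.prems False
      by (auto simp: strict_mono_on_def)
    ultimately show ?thesis using False Suc.prems by simp
  qed
qed


locale setupA =
  fixes \<sigma> :: "'k::field \<Rightarrow> 'k" and l g :: nat and f fs :: "nat \<Rightarrow> nat"
    and jseq iseq :: "nat \<Rightarrow> nat \<Rightarrow> nat"
  assumes s0: "\<sigma> 0 = 0"
    and f_sum: "\<forall>t<l. f t + fs t = g"
    and j_mono: "\<forall>t<l. strict_mono_on {1..f t} (jseq t)"
    and i_mono: "\<forall>t<l. strict_mono_on {1..fs t} (iseq t)"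
    and ji_cover: "\<forall>t<l. jseq t ` {1..f t} \<union> iseq t ` {1..fs t} = {1..g}"
    and ji_disj: "\<forall>t<l. jseq t ` {1..f t} \<inter> iseq t ` {1..fs t} = {}"
begin

abbreviation "w t \<equiv> wperm f fs jseq iseq t"

lemma wperm_j: assumes "t < l" "k \<in> {1..f t}" shows "w t (jseq t k) = k"
proof -
  have inj: "inj_on (jseq t) {1..f t}"
    using j_mono assms(1) strict_mono_on_imp_inj_on by blast
  have "(THE k'. k' \<in> {1..f t} \<and> jseq t k' = jseq t k) = k"
    by (rule the_equality) (use assms inj in \<open>auto dest: inj_onD\<close>)
  thus ?thesis using assms by (simp add: wperm_def)
qed

lemma wperm_i: assumes "t < l" "k \<in> {1..fs t}" shows "w t (iseq t k) = f t + k"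
proof -
  have inj: "inj_on (iseq t) {1..fs t}"
    using i_mono assms(1) strict_mono_on_imp_inj_on by blast
  have nj: "iseq t k \<notin> jseq t ` {1..f t}" using ji_disj assms by blast
  have "(THE k'. k' \<in> {1..fs t} \<and> iseq t k' = iseq t k) = k"
    by (rule the_equality) (use assms inj in \<open>auto dest: inj_onD\<close>)
  thus ?thesis using assms nj by (simp add: wperm_def)
qed

lemma basis_cases:
  assumes "x \<in> {1..g}" "t < l"
  obtains (J) k where "k \<in> {1..f t}" "x = jseq t k" "w t x = k"
        | (I) k where "k \<in> {1..fs t}" "x = iseq t k" "w t x = f t + k"
proof -
  have "x \<in> jseq t ` {1..f t} \<or> x \<in> iseq t ` {1..fs t}" using ji_cover assms by blast
  thus ?thesis using wperm_j wperm_i assms that by blast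
qed

lemma iseq_ge: assumes "t < l" "k \<in> {1..fs t}" shows "k \<le> iseq t k"
proof -
  have "iseq t 1 \<in> {1..g}" using ji_cover assms by fastforce
  thus ?thesis using mono_ge[of "fs t" "iseq t" 0 k] i_mono assms by auto
qed

lemma S0: assumes "t < l" "v \<in> CS {1..g}" shows "Fmap \<sigma> g f fs jseq iseq t v \<in> CS {1..fs t}"
  unfolding Fmap_def
proof (rule semilin_CS[of \<sigma>, OF s0 assms(2)])
  fix x assume "x \<in> {1..g}"
  then show "(let w = w t x in if w > f t then ebas (w - f t) else 0) \<in> CS {1..fs t}"
    using assms(1) by (cases rule: basis_cases) (auto simp: Let_def intro: CS_ebas)
qed

lemma S1: assumes "t < l" "a \<le> fs t" "v \<in> CS {1..a}"
  shows "Fmap \<sigma> g f fs jseq iseq t v \<in> CS {1..a}"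
  unfolding Fmap_def
proof (rule semilin_CS[of \<sigma>, OF s0 assms(3)])
  fix x assume x: "x \<in> {1..a}"
  have ag: "a \<le> g" using f_sum assms by force
  from x ag have "x \<in> {1..g}" by auto
  then show "(let w = w t x in if w > f t then ebas (w - f t) else 0) \<in> CS {1..a}"
    using assms(1)
  proof (cases rule: basis_cases)
    case (I k)
    then have "k \<le> a" using iseq_ge[OF assms(1) I(1)] x by auto
    then show ?thesis using I by (auto simp: Let_def intro: CS_ebas)
  qed (auto simp: Let_def)
qed

lemma S2: assumes "t < l" "fs t < a" "a \<le> g" "maximal fs iseq t" "v \<in> CS {1..a}"
  shows "Fmap \<sigma> g f fs jseq iseq t v + V'map \<sigma> g f fs jseq iseq t v \<in> CS {1..a}"
proof (rule CS_add)
  have "v \<in> CS {1..g}" using assms(3,5) by (auto intro: CS_mono)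
  from S0[OF assms(1) this] show "Fmap \<sigma> g f fs jseq iseq t v \<in> CS {1..a}"
    using assms(2) by (auto intro: CS_mono)
  show "V'map \<sigma> g f fs jseq iseq t v \<in> CS {1..a}"
    unfolding V'map_def
  proof (rule semilin_CS[of \<sigma>, OF s0 assms(5)])
    fix x assume x: "x \<in> {1..a}"
    with assms(3) have "x \<in> {1..g}" by auto
    then show "(let w = w t x in if w \<le> f t then ebas (fs t + w) else 0) \<in> CS {1..a}"
      using assms(1)
    proof (cases rule: basis_cases)
      case (J k)
      have iim: "iseq t ` {1..fs t} = {1..fs t}"
        using assms(4) by (auto simp: maximal_def image_iff)
      have "jseq t 1 \<in> {1..g}" "jseq t 1 \<notin> iseq t ` {1..fs t}"
        using ji_cover ji_disj assms(1) J(1) by fastforce+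
      then have "fs t + 1 \<le> jseq t 1" using iim by auto
      then have "fs t + k \<le> jseq t k" using mono_ge[of "f t" "jseq t" "fs t" k] j_mono assms(1) J by auto
      then show ?thesis using J x by (auto simp: Let_def intro: CS_ebas)
    qed (auto simp: Let_def)
  qed
qed

lemma not_max: assumes "t < l" "\<not> maximal fs iseq t"
  shows "1 \<le> fs t" "fs t < iseq t (fs t)"
proof -
  obtain k where k: "k \<in> {1..fs t}" "iseq t k \<noteq> k" using assms by (auto simp: maximal_def)
  then show "1 \<le> fs t" by auto
  have "k < iseq t k" using k iseq_ge[OF assms(1) k(1)] by auto
  moreover have "iseq t k + (fs t - k) \<le> iseq t (fs t)"
    using mono_gap[of "fs t" "iseq t" k "fs t"] i_mono assms(1) k by auto
  ultimately show "fs t < iseq t (fs t)" using k by auto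
qed

lemma S3: assumes "t < l" "\<not> maximal fs iseq t" "v \<in> CS {1..fs t}"
  shows "Fmap \<sigma> g f fs jseq iseq t v \<in> CS {1..fs t - 1}"
  unfolding Fmap_def
proof (rule semilin_CS[of \<sigma>, OF s0 assms(3)])
  fix x assume x: "x \<in> {1..fs t}"
  have ag: "fs t \<le> g" using f_sum assms by force
  from x ag have "x \<in> {1..g}" by auto
  then show "(let w = w t x in if w > f t then ebas (w - f t) else 0) \<in> CS {1..fs t - 1}"
    using assms(1)
  proof (cases rule: basis_cases)
    case (I k)
    then have "k \<le> fs t" "k \<noteq> fs t" using x not_max[OF assms(1,2)] by auto
    then show ?thesis using I by (auto simp: Let_def intro: CS_ebas)
  qed (auto simp: Let_def)
qed

definition hf where "hf t x = (let w = w t x in if w > f t then w - f t else fs t + w)"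

lemma Hmap_chain: assumes "v \<in> CS A"
  shows "Hmap \<sigma> l g f fs jseq iseq \<tau> i v \<in> CS (hf ((\<tau> + i) mod l) ` A)"
proof -
  define t where "t = (\<tau> + i) mod l"
  have F: "Fmap \<sigma> g f fs jseq iseq t v \<in> CS (hf t ` A)"
    unfolding Fmap_def
    by (rule semilin_CS[of \<sigma>, OF s0 assms]) (auto simp: Let_def hf_def intro: CS_ebas)
  have V: "V'map \<sigma> g f fs jseq iseq t v \<in> CS (hf t ` A)"
    unfolding V'map_def
    by (rule semilin_CS[of \<sigma>, OF s0 assms]) (auto simp: Let_def hf_def intro: CS_ebas)
  show ?thesis using F V CS_add[OF F V] unfolding Hmap_def t_def[symmetric] by (auto simp: Let_def)
qed

lemma proj_CS: "v \<in> CS A \<Longrightarrow> proj fs iseq t v \<in> CS A"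
  by (auto simp: proj_def CS_def)

lemma proj_bad: assumes "t < l" "\<not> maximal fs iseq t" "v \<in> CS {1..fs t}"
  shows "proj fs iseq t v \<in> CS (iseq t ` {1..fs t - 1})"
proof -
  have "\<And>m. m \<in> {1..fs t} \<Longrightarrow> m \<in> iseq t ` {1..fs t} \<Longrightarrow> m \<in> iseq t ` {1..fs t - 1}"
  proof -
    fix m assume m: "m \<in> {1..fs t}" "m \<in> iseq t ` {1..fs t}"
    then obtain k where k: "k \<in> {1..fs t}" "m = iseq t k" by auto
    have "k \<noteq> fs t" using not_max[OF assms(1,2)] m k by auto
    thus "m \<in> iseq t ` {1..fs t - 1}" using k by auto
  qed
  thus ?thesis using assms(3) by (auto simp: proj_def CS_def)
qed


abbreviation "HC \<tau> n \<equiv> Hcomp \<sigma> l g f fs jseq iseq \<tau> n"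

lemma L1:
  assumes "\<tau> < l" "\<forall>t<l. fs t < fs \<tau> \<longrightarrow> maximal fs iseq t" "1 \<le> i" "v \<in> Mtau g"
  shows "HC \<tau> i v \<in> CS {1..fs \<tau>}"
  using assms(3)
proof (induction i)
  case 0 then show ?case by simp
next
  case (Suc i)
  have lpos: "0 < l" using assms(1) by simp
  show ?case
  proof (cases "i = 0")
    case True
    have "\<tau> mod l = \<tau>" using assms(1) by simp
    then show ?thesis using True S0[OF assms(1)] assms(4)
      by (simp add: Hmap_def Mtau_CS)
  next
    case False
    define t where "t = (\<tau> + i) mod l"
    have tl: "t < l" using lpos by (simp add: t_def)
    have IH: "HC \<tau> i v \<in> CS {1..fs \<tau>}" using Suc False by simp
    have ag: "fs \<tau> \<le> g" using f_sum assms(1) by force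
    show ?thesis
    proof (cases "fs \<tau> \<le> fs t")
      case True
      then show ?thesis using S1[OF tl True IH]
        by (simp add: Hmap_def t_def[symmetric] Let_def)
    next
      case False
      then have "fs t < fs \<tau>" by simp
      from S2[OF tl this ag _ IH] assms(2) tl this False show ?thesis
        by (simp add: Hmap_def t_def[symmetric] Let_def plus_fun_def)
    qed
  qed
qed

lemma L2:
  assumes "\<forall>v\<in>Mtau g. HC \<tau> i v \<in> CS A" "finite A"
  shows "\<exists>B. finite B \<and> card B \<le> card A \<and> (\<forall>v\<in>Mtau g. HC \<tau> (i + k) v \<in> CS B)"
proof (induction k)
  case 0 then show ?case using assms by auto
next
  case (Suc k)
  then obtain B where B: "finite B" "card B \<le> card A" "\<forall>v\<in>Mtau g. HC \<tau> (i + k) v \<in> CS B"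
    by blast
  define B' where "B' = hf ((\<tau> + (i + k)) mod l) ` B"
  have "finite B'" "card B' \<le> card A" using B le_trans[OF card_image_le[OF B(1)] B(2)] unfolding B'_def by auto
  moreover have "\<forall>v\<in>Mtau g. HC \<tau> (i + Suc k) v \<in> CS B'"
    using B(3) Hmap_chain unfolding B'_def by simp
  ultimately show ?case by blast
qed

lemma core:
  assumes "\<tau> < l" "\<forall>t<l. fs t < fs \<tau> \<longrightarrow> maximal fs iseq t"
    and dim: "kdim (proj fs iseq \<tau> ` HC \<tau> l ` Mtau g) = fs \<tau>"
    and "t0 < l" "fs t0 = fs \<tau>"
  shows "maximal fs iseq t0"
proof (rule ccontr)
  assume nm: "\<not> maximal fs iseq t0"
  have lpos: "1 \<le> l" using assms(1) by simp
  have a1: "1 \<le> fs \<tau>" using not_max[OF assms(4) nm] assms(5) by simp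
  obtain B where B: "finite B" "card B < fs \<tau>"
    "proj fs iseq \<tau> ` HC \<tau> l ` Mtau g \<subseteq> CS B"
  proof (cases "t0 = \<tau>")
    case True
    have "\<forall>v\<in>Mtau g. proj fs iseq \<tau> (HC \<tau> l v) \<in> CS (iseq \<tau> ` {1..fs \<tau> - 1})"
      using proj_bad[OF assms(1)] nm True L1[OF assms(1,2) lpos] by blast
    moreover have "card (iseq \<tau> ` {1..fs \<tau> - 1}) < fs \<tau>"
      using card_image_le[of "{1..fs \<tau> - 1}" "iseq \<tau>"] a1 by simp
    ultimately show ?thesis using that[of "iseq \<tau> ` {1..fs \<tau> - 1}"] by blast
  next
    case False
    define i0 where "i0 = (t0 + l - \<tau>) mod l"
    have "(\<tau> + i0) mod l = (\<tau> + (t0 + l - \<tau>)) mod l" unfolding i0_def by (rule mod_add_right_eq)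
    also have "\<tau> + (t0 + l - \<tau>) = t0 + l" using assms(1) by simp
    finally have ti: "(\<tau> + i0) mod l = t0" using assms(4) by simp
    have i1: "1 \<le> i0" using ti False assms(1) by (cases "i0 = 0") auto
    have i2: "i0 < l" using lpos unfolding i0_def by simp
    have "\<forall>v\<in>Mtau g. HC \<tau> (Suc i0) v \<in> CS {1..fs \<tau> - 1}"
    proof
      fix v :: "nat \<Rightarrow> 'k" assume v: "v \<in> Mtau g"
      have "HC \<tau> i0 v \<in> CS {1..fs t0}" using L1[OF assms(1,2) i1 v] assms(5) by simp
      from S3[OF assms(4) nm this] ti assms(5) show "HC \<tau> (Suc i0) v \<in> CS {1..fs \<tau> - 1}"
        by (simp add: Hmap_def Let_def)
    qed
    from L2[OF this, of "l - Suc i0"] i2 obtain B where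
      "finite B" "card B \<le> fs \<tau> - 1" "\<forall>v\<in>Mtau g. HC \<tau> l v \<in> CS B" by auto
    then show ?thesis using that[of B] a1 proj_CS by fastforce
  qed
  then have "kdim (proj fs iseq \<tau> ` HC \<tau> l ` Mtau g) \<le> card B" by (intro kdim_le) auto
  then show False using dim B by simp
qed

end

theorem theorem4p6:
  fixes l g u :: nat and f fs :: "nat \<Rightarrow> nat" and jseq iseq :: "nat \<Rightarrow> nat \<Rightarrow> nat"
    and tauu :: "nat \<Rightarrow> nat"
    and \<sigma> :: "'p::prime_card kbar \<Rightarrow> 'p kbar"
  defines "\<sigma> \<equiv> frob"
  assumes l_pos: "l \<ge> 1" and g_pos: "g \<ge> 1"
    and f_sum: "\<forall>t<l. f t + fs t = g"
    and j_mono: "\<forall>t<l. strict_mono_on {1..f t} (jseq t)"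
    and i_mono: "\<forall>t<l. strict_mono_on {1..fs t} (iseq t)"
    and ji_cover: "\<forall>t<l. jseq t ` {1..f t} \<union> iseq t ` {1..fs t} = {1..g}"
    and ji_disj: "\<forall>t<l. jseq t ` {1..f t} \<inter> iseq t ` {1..fs t} = {}"
    and tauu_def: "\<forall>v\<in>{1..length (sorted_list_of_set (fs ` {0..<l}))}.
          tauu v < l \<and> fs (tauu v) = sorted_list_of_set (fs ` {0..<l}) ! (v - 1)"
    and u_range: "1 \<le> u" "u \<le> length (sorted_list_of_set (fs ` {0..<l}))"
    and dim_hyp: "\<forall>j\<in>{1..u}.
          kdim (proj fs iseq (tauu j) ` Hcomp \<sigma> l g f fs jseq iseq (tauu j) l ` Mtau g)
            = sorted_list_of_set (fs ` {0..<l}) ! (j - 1)"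
  shows "\<forall>t<l. fs t \<le> sorted_list_of_set (fs ` {0..<l}) ! (u - 1) \<longrightarrow> maximal fs iseq t"
proof -
  let ?L = "sorted_list_of_set (fs ` {0..<l})"
  interpret setupA \<sigma> l g f fs jseq iseq
    by unfold_locales (use f_sum j_mono i_mono ji_cover ji_disj in \<open>auto simp: \<sigma>_def frob0\<close>)
  have fin: "finite (fs ` {0..<l})" by simp
  have setL: "set ?L = fs ` {0..<l}" using fin by simp
  have sL: "sorted ?L" and dL: "distinct ?L" by auto
  have idx: "\<exists>i<length ?L. fs t = ?L ! i" if "t < l" for t
  proof -
    have "fs t \<in> set ?L" using setL that by auto
    thus ?thesis by (metis in_set_conv_nth)
  qed
  have lt_idx: "i < k" if "i < length ?L" "k < length ?L" "?L ! i < ?L ! k" for i k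
  proof (rule ccontr)
    assume "\<not> i < k"
    then have "?L ! k \<le> ?L ! i" using sorted_nth_mono[OF sL] that by simp
    thus False using that by simp
  qed
  have P: "\<forall>t<l. fs t = ?L ! (j - 1) \<longrightarrow> maximal fs iseq t" if "1 \<le> j" "j \<le> u" for j
    using that
  proof (induction j rule: less_induct)
    case (less j)
    define \<tau> where "\<tau> = tauu j"
    have jL: "j \<in> {1..length ?L}" using less.prems u_range by auto
    have \<tau>: "\<tau> < l" "fs \<tau> = ?L ! (j - 1)" using tauu_def jL unfolding \<tau>_def by auto
    have IH: "\<forall>t<l. fs t < fs \<tau> \<longrightarrow> maximal fs iseq t"
    proof (intro allI impI)
      fix t assume t: "t < l" "fs t < fs \<tau>"
      obtain i where i: "i < length ?L" "fs t = ?L ! i" using idx[OF t(1)] by blast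
      have "i < j - 1" using lt_idx[of i "j - 1"] i t \<tau> jL by auto
      then show "maximal fs iseq t" using less.IH[of "i + 1"] less.prems i t by auto
    qed
    have dim: "kdim (proj fs iseq \<tau> ` HC \<tau> l ` Mtau g) = fs \<tau>"
      using dim_hyp less.prems \<tau> unfolding \<tau>_def by auto
    show ?case using core[OF \<tau>(1) IH dim] \<tau> by auto
  qed
  show ?thesis
  proof (intro allI impI)
    fix t assume t: "t < l" "fs t \<le> ?L ! (u - 1)"
    obtain i where i: "i < length ?L" "fs t = ?L ! i" using idx[OF t(1)] by blast
    have "\<not> u - 1 < i"
    proof
      assume ui: "u - 1 < i"
      then have "?L ! (u - 1) \<le> ?L ! i" using sorted_nth_mono[OF sL] i by simp
      then have "?L ! (u - 1) = ?L ! i" using i t by simp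
      then have "u - 1 = i" using nth_eq_iff_index_eq[OF dL] i ui by simp
      then show False using ui by simp
    qed
    then show "maximal fs iseq t" using P[of "i + 1"] i t u_range by auto
  qed
qed

end
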